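(* Write $\cdot|_0$ for substitution $f_1'=0$. For every polynomial $\mathcal P$ in ten variables there exist polynomials $\mathcal P_0,\mathcal Q_0,\mathcal R_0,\mathcal S_0,\mathcal T_0,\mathcal U_0,\mathcal V_0$ in four variables such that, identically in the jet variables, $$\mathcal P(\Lambda^3|_0,\Lambda^5_1|_0,\Lambda^7_{1,1}|_0,M^8|_0,\Lambda^9_{1,1,1}|_0,M^{10}_1|_0,N^{12}|_0,K^{12}_{1,1}|_0,H^{14}_1|_0,F^{16}_{1,1}|_0)$$ $$=\mathcal P_0(\Lambda^3,\Lambda^5_1,M^8,N^{12})|_0+\Lambda^7_{1,1}\mathcal Q_0(\Lambda^5_1,\Lambda^7_{1,1},M^8,N^{12})|_0+\Lambda^9_{1,1,1}\mathcal R_0(\Lambda^7_{1,1},M^8,\Lambda^9_{1,1,1},N^{12})|_0+M^{10}_1\mathcal S_0(M^8,\Lambda^9_{1,1,1},M^{10}_1,N^{12})|_0$$ $$+K^{12}_{1,1}\mathcal T_0(\Lambda^9_{1,1,1},M^{10}_1,N^{12},K^{12}_{1,1})|_0+H^{14}_1\mathcal U_0(\Lambda^9_{1,1,1},N^{12},K^{12}_{1,1},H^{14}_1)|_0+F^{16}_{1,1}\mathcal V_0(\Lambda^9_{1,1,1},K^{12}_{1,1},H^{14}_1,F^{16}_{1,1})|_0 .$$ Moreover this representation is unique: if the right-hand side vanishes identically in $\mathbb C[f_2',f_1'',f_2'',\dots,f_1^{(5)},f_2^{(5)}]$, then $\mathcal P_0,\mathcal Q_0,\mathcal R_0,\mathcal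 S_0,\mathcal T_0,\mathcal U_0,\mathcal V_0$ are all identically zero.
   Context: $f_i^{(\lambda)}$ ($i\in\{1,2\}$, $\lambda\ge1$) are independent indeterminates; $D=\sum_{i,\lambda}f_i^{(\lambda+1)}\partial/\partial f_i^{(\lambda)}$; $\Delta^{\alpha,\beta}:=f_1^{(\alpha)}f_2^{(\beta)}-f_1^{(\beta)}f_2^{(\alpha)}$; for $P,Q$ of weights $m,n$, $[P,Q]:=n\,DP\cdot Q-m\,P\cdot DQ$ (superscripts below are weights, $f_1'$ has weight 1). $\Lambda^3:=\Delta^{1,2}$; $\Lambda^5_1:=\Delta^{1,3}f_1'-3\Delta^{1,2}f_1''$; $\Lambda^7_{1,1}:=(\Delta^{1,4}+4\Delta^{2,3})(f_1')^2-10\Delta^{1,3}f_1'f_1''+15\Delta^{1,2}(f_1'')^2$; $M^8:=3\Delta^{1,4}\Delta^{1,2}+12\Delta^{2,3}\Delta^{1,2}-5(\Delta^{1,3})^2$; $\Lambda^9_{1,1,1}:=[\Lambda^7_{1,1},f_1']$; $M^{10}_1:=[M^8,f_1']$; $N^{12}:=[M^8,\Lambda^3]$; $K^{12}_{1,1}:=[\Lambda^7_{1,1},\Lambda^5_1]/f_1'$ (this bracket is divisible by $f_1'$); $H^{14}_1:=[M^8,\Lambda^5_1]$; $F^{16}_{1,1}:=[M^8,\Lambda^7_{1,1}]$. *)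

theory Defs
  imports Complex_Main "HOL-Library.Poly_Mapping"
begin

type_synonym 'v mpoly = "('v \<Rightarrow>\<^sub>0 nat) \<Rightarrow>\<^sub>0 complex"

text \<open>Jet variables: (i, l) stands for f_i^(l) (only i in {1,2}, l \<ge> 1 are used).\<close>
type_synonym jpoly = "(nat \<times> nat) mpoly"

definition mvars :: "'v mpoly \<Rightarrow> 'v set" where
  "mvars p = \<Union> (Poly_Mapping.keys ` Poly_Mapping.keys p)"

definition Var :: "'v \<Rightarrow> 'v mpoly" where
  "Var v = Poly_Mapping.single (Poly_Mapping.single v 1) 1"

definition mconst :: "complex \<Rightarrow> 'v mpoly" where
  "mconst c = Poly_Mapping.single 0 c"

definition pdiff :: "'v \<Rightarrow> 'v mpoly \<Rightarrow> 'v mpoly" where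
  "pdiff v p = (\<Sum>m\<in>Poly_Mapping.keys p.
      Poly_Mapping.single (m - Poly_Mapping.single v 1)
        (Poly_Mapping.lookup p m * of_nat (Poly_Mapping.lookup m v)))"

definition ins :: "('v \<Rightarrow> jpoly) \<Rightarrow> 'v mpoly \<Rightarrow> jpoly" where
  "ins \<sigma> p = (\<Sum>m\<in>Poly_Mapping.keys p.
      mconst (Poly_Mapping.lookup p m) * (\<Prod>v\<in>Poly_Mapping.keys m. \<sigma> v ^ Poly_Mapping.lookup m v))"

definition Dj :: "jpoly \<Rightarrow> jpoly" where
  "Dj p = (\<Sum>v\<in>mvars p. pdiff v p * Var (fst v, Suc (snd v)))"

definition fj :: "nat \<Rightarrow> nat \<Rightarrow> jpoly" where
  "fj i l = Var (i, l)"

definition Delta :: "nat \<Rightarrow> nat \<Rightarrow> jpoly" where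
  "Delta a b = fj 1 a * fj 2 b - fj 1 b * fj 2 a"

text \<open>Bracket [P,Q] := n DP Q - m P DQ for P, Q of weights m, n.\<close>
definition brk :: "nat \<Rightarrow> nat \<Rightarrow> jpoly \<Rightarrow> jpoly \<Rightarrow> jpoly" where
  "brk m n P Q = of_nat n * Dj P * Q - of_nat m * P * Dj Q"

definition Lam3 :: jpoly where "Lam3 = Delta 1 2"
definition Lam5 :: jpoly where "Lam5 = Delta 1 3 * fj 1 1 - 3 * Delta 1 2 * fj 1 2"
definition Lam7 :: jpoly where
  "Lam7 = (Delta 1 4 + 4 * Delta 2 3) * (fj 1 1)^2 - 10 * Delta 1 3 * fj 1 1 * fj 1 2
          + 15 * Delta 1 2 * (fj 1 2)^2"
definition M8 :: jpoly where
  "M8 = 3 * Delta 1 4 * Delta 1 2 + 12 * Delta 2 3 * Delta 1 2 - 5 * (Delta 1 3)^2"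
definition Lam9 :: jpoly where "Lam9 = brk 7 1 Lam7 (fj 1 1)"
definition M10 :: jpoly where "M10 = brk 8 1 M8 (fj 1 1)"
definition N12 :: jpoly where "N12 = brk 8 3 M8 Lam3"
text \<open>K^12 = [Lam7, Lam5] / f_1' (the bracket is divisible by f_1').\<close>
definition K12 :: jpoly where "K12 = (THE q. brk 7 5 Lam7 Lam5 = fj 1 1 * q)"
definition H14 :: jpoly where "H14 = brk 8 5 M8 Lam5"
definition F16 :: jpoly where "F16 = brk 8 7 M8 Lam7"

definition subst0 :: "jpoly \<Rightarrow> jpoly" where
  "subst0 p = ins (\<lambda>v. if v = (1, 1) then 0 else Var v) p"

end

theory Submission
  imports Defs "HOL-Library.Product_Lexorder"
begin


abbreviation lk where "lk \<equiv> Poly_Mapping.lookup"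
abbreviation ks where "ks \<equiv> Poly_Mapping.keys"
abbreviation sg where "sg \<equiv> Poly_Mapping.single"

lemma mpoly_sum_single:
  "(p::('a \<Rightarrow>\<^sub>0 'b::comm_monoid_add)) = (\<Sum>k\<in>ks p. sg k (lk p k))"
  by (rule poly_mapping_eqI) (auto simp: lookup_sum lookup_single when_def in_keys_iff)

lemma pm_induct[case_names zero add single]:
  fixes p :: "'a \<Rightarrow>\<^sub>0 'b::comm_monoid_add"
  assumes "P 0" "\<And>p q. P p \<Longrightarrow> P q \<Longrightarrow> P (p+q)" "\<And>k c. P (sg k c)"
  shows "P p"
proof -
  have "P (\<Sum>k\<in>S. sg k (f k))" if "finite S" for S f
    using that by (induction S rule: finite_induct) (auto simp: assms)
  hence "P (\<Sum>k\<in>ks p. sg k (lk p k))" by simp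
  thus ?thesis by (subst mpoly_sum_single)
qed

lemma mconst_0[simp]: "mconst 0 = 0" by (simp add: mconst_def)
lemma mconst_1[simp]: "mconst 1 = 1" by (simp add: mconst_def)
lemma mconst_add: "mconst (a+b) = mconst a + mconst b" by (simp add: mconst_def single_add)
lemma mconst_mult: "mconst (a*b) = mconst a * mconst b" by (simp add: mconst_def mult_single)
lemma mconst_uminus: "mconst (-a) = - mconst a" by (simp add: mconst_def single_uminus)
lemma mconst_diff: "mconst (a-b) = mconst a - mconst b" by (simp add: mconst_def single_diff)
lemma mconst_numeral[simp]: "mconst (numeral n) = numeral n" by (simp add: mconst_def)
lemma mconst_of_nat[simp]: "mconst (of_nat n) = of_nat n" by (simp add: mconst_def)
lemma mconst_power: "mconst (a^n) = mconst a ^ n" by (induction n) (simp_all add: mconst_mult)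

definition mmono :: "('v \<Rightarrow> jpoly) \<Rightarrow> ('v \<Rightarrow>\<^sub>0 nat) \<Rightarrow> jpoly" where
  "mmono \<sigma> e = (\<Prod>v\<in>ks e. \<sigma> v ^ lk e v)"

lemma mmono_superset: "finite S \<Longrightarrow> ks e \<subseteq> S \<Longrightarrow> mmono \<sigma> e = (\<Prod>v\<in>S. \<sigma> v ^ lk e v)"
  unfolding mmono_def by (rule prod.mono_neutral_left) (auto simp: in_keys_iff)

lemma mmono_zero[simp]: "mmono \<sigma> 0 = 1" by (simp add: mmono_def)

lemma mmono_add: "mmono \<sigma> (e+f) = mmono \<sigma> e * mmono \<sigma> f"
proof -
  let ?S = "ks e \<union> ks f"
  have "mmono \<sigma> (e+f) = (\<Prod>v\<in>?S. \<sigma> v ^ lk (e+f) v)"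
    by (rule mmono_superset) (auto dest: set_mp[OF keys_add])
  also have "\<dots> = (\<Prod>v\<in>?S. \<sigma> v ^ lk e v) * (\<Prod>v\<in>?S. \<sigma> v ^ lk f v)"
    by (simp add: lookup_add power_add prod.distrib)
  also have "\<dots> = mmono \<sigma> e * mmono \<sigma> f"
    using mmono_superset[of ?S e \<sigma>] mmono_superset[of ?S f \<sigma>] by simp
  finally show ?thesis .
qed

lemma ins_superset: "finite S \<Longrightarrow> ks p \<subseteq> S \<Longrightarrow> ins \<sigma> p = (\<Sum>m\<in>S. mconst (lk p m) * mmono \<sigma> m)"
  unfolding ins_def mmono_def by (rule sum.mono_neutral_left) (auto simp: in_keys_iff)

lemma ins_zero[simp]: "ins \<sigma> 0 = 0" by (simp add: ins_def)

lemma ins_add: "ins \<sigma> (p+q) = ins \<sigma> p + ins \<sigma> q"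
proof -
  let ?S = "ks p \<union> ks q"
  have "ins \<sigma> (p+q) = (\<Sum>m\<in>?S. mconst (lk (p+q) m) * mmono \<sigma> m)"
    by (rule ins_superset) (auto dest: set_mp[OF keys_add])
  also have "\<dots> = (\<Sum>m\<in>?S. mconst (lk p m) * mmono \<sigma> m) + (\<Sum>m\<in>?S. mconst (lk q m) * mmono \<sigma> m)"
    by (simp add: lookup_add mconst_add distrib_right sum.distrib)
  also have "\<dots> = ins \<sigma> p + ins \<sigma> q"
    using ins_superset[of ?S p \<sigma>] ins_superset[of ?S q \<sigma>] by simp
  finally show ?thesis .
qed

lemma ins_single: "ins \<sigma> (sg e c) = mconst c * mmono \<sigma> e"
  by (cases "c = 0") (simp_all add: ins_def mmono_def)

lemma ins_mult: "ins \<sigma> (p*q) = ins \<sigma> p * ins \<sigma> q"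
proof (induction p rule: pm_induct)
  case zero thus ?case by simp
next
  case (add p1 p2) thus ?case by (simp add: distrib_right ins_add)
next
  case (single k c)
  show ?case
  proof (induction q rule: pm_induct)
    case zero thus ?case by simp
  next
    case (add q1 q2) thus ?case by (simp add: distrib_left ins_add)
  next
    case (single k' c')
    thus ?case by (simp add: mult_single ins_single mmono_add mconst_mult mult_ac)
  qed
qed

lemma ins_uminus: "ins \<sigma> (-p) = - ins \<sigma> p"
proof -
  have "ins \<sigma> (-p) + ins \<sigma> p = 0" by (simp flip: ins_add)
  thus ?thesis by (simp add: eq_neg_iff_add_eq_0)
qed

lemma ins_diff: "ins \<sigma> (p-q) = ins \<sigma> p - ins \<sigma> q"
  using ins_add[of \<sigma> p "-q"] by (simp add: ins_uminus)

lemma ins_mconst[simp]: "ins \<sigma> (mconst c) = mconst c"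
  by (simp add: mconst_def ins_single)
lemma ins_one[simp]: "ins \<sigma> 1 = 1"
  using ins_mconst[of \<sigma> 1] by simp
lemma ins_numeral[simp]: "ins \<sigma> (numeral n) = numeral n"
  using ins_mconst[of \<sigma> "numeral n"] by simp
lemma ins_of_nat[simp]: "ins \<sigma> (of_nat n) = of_nat n"
  using ins_mconst[of \<sigma> "of_nat n"] by simp
lemma ins_Var[simp]: "ins \<sigma> (Var v) = \<sigma> v"
  by (simp add: Var_def ins_single mmono_def)
lemma ins_power: "ins \<sigma> (p^n) = ins \<sigma> p ^ n"
  by (induction n) (simp_all add: ins_mult)
lemma ins_prod: "ins \<sigma> (\<Prod>v\<in>S. f v) = (\<Prod>v\<in>S. ins \<sigma> (f v))"
  by (induction S rule: infinite_finite_induct) (simp_all add: ins_mult)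

lemma ins_ins: "ins \<tau> (ins \<sigma> P) = ins (\<lambda>v. ins \<tau> (\<sigma> v)) P"
proof (induction P rule: pm_induct)
  case zero thus ?case by simp
next
  case (add p q) thus ?case by (simp add: ins_add)
next
  case (single k c) thus ?case
    by (simp add: ins_single ins_mult mmono_def ins_prod ins_power)
qed

lemma pdiff_superset: "finite S \<Longrightarrow> ks p \<subseteq> S \<Longrightarrow>
   pdiff v p = (\<Sum>m\<in>S. sg (m - sg v 1) (lk p m * of_nat (lk m v)))"
  unfolding pdiff_def by (rule sum.mono_neutral_left) (auto simp: in_keys_iff)

lemma pdiff_zero[simp]: "pdiff v 0 = 0" by (simp add: pdiff_def)

lemma pdiff_add: "pdiff v (p+q) = pdiff v p + pdiff v q"
proof -
  let ?S = "ks p \<union> ks q"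
  have "pdiff v (p+q) = (\<Sum>m\<in>?S. sg (m - sg v 1) (lk (p+q) m * of_nat (lk m v)))"
    by (rule pdiff_superset) (auto dest: set_mp[OF keys_add])
  also have "\<dots> = (\<Sum>m\<in>?S. sg (m - sg v 1) (lk p m * of_nat (lk m v)))
       + (\<Sum>m\<in>?S. sg (m - sg v 1) (lk q m * of_nat (lk m v)))"
    by (simp add: lookup_add distrib_right single_add sum.distrib)
  also have "\<dots> = pdiff v p + pdiff v q"
    using pdiff_superset[of ?S p v] pdiff_superset[of ?S q v] by simp
  finally show ?thesis .
qed

lemma pdiff_single: "pdiff v (sg e c) = sg (e - sg v 1) (c * of_nat (lk e v))"
  by (cases "c = 0") (simp_all add: pdiff_def)

lemma pm_shift: "lk e v \<ge> 1 \<Longrightarrow> e - sg v 1 + f = e + f - sg (v::'a) (1::nat)"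
  by (rule poly_mapping_eqI) (auto simp: lookup_add lookup_minus lookup_single when_def)

lemma pm_shift2: "lk f v \<ge> 1 \<Longrightarrow> e + (f - sg v 1) = e + f - sg (v::'a) (1::nat)"
  by (rule poly_mapping_eqI) (auto simp: lookup_add lookup_minus lookup_single when_def)

lemma pm_shift3: "lk f v \<ge> 1 \<Longrightarrow> f + e - sg v 1 = e + (f - sg (v::'a) (1::nat))"
  by (rule poly_mapping_eqI) (auto simp: lookup_add lookup_minus lookup_single when_def)

lemma shiftL: "sg (k - sg v 1 + k') (a * of_nat (lk k v)) = sg (k + k' - sg v 1) (a * (of_nat (lk k v)::complex))"
proof (cases "lk k v = 0")
  case False
  have "k - sg v 1 + k' = k + k' - sg v 1" using False by (intro pm_shift) simp
  thus ?thesis by simp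
qed simp

lemma shiftR: "sg (k + (k' - sg v 1)) (a * of_nat (lk k' v)) = sg (k + k' - sg v 1) (a * (of_nat (lk k' v)::complex))"
proof (cases "lk k' v = 0")
  case False
  have "k + (k' - sg v 1) = k + k' - sg v 1" using False by (intro pm_shift2) simp
  thus ?thesis by simp
qed simp

lemma pdiff_single_mult: "pdiff v (sg k c * sg k' c') = pdiff v (sg k c) * sg k' c' + sg k c * pdiff v (sg k' c')"
proof -
  have "pdiff v (sg k c * sg k' c') = sg (k + k' - sg v 1) (c*c' * of_nat(lk k v + lk k' v))"
    by (simp add: mult_single pdiff_single lookup_add)
  also have "\<dots> = sg (k + k' - sg v 1) ((c*c') * of_nat(lk k v)) + sg (k + k' - sg v 1) ((c*c') * of_nat (lk k' v))"
    by (simp add: algebra_simps flip: single_add)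
  also have "\<dots> = sg (k - sg v 1 + k') ((c*c') * of_nat(lk k v)) + sg (k + (k' - sg v 1)) ((c*c') * of_nat (lk k' v))"
    by (simp only: shiftL shiftR)
  also have "\<dots> = pdiff v (sg k c) * sg k' c' + sg k c * pdiff v (sg k' c')"
    by (simp add: mult_single pdiff_single mult_ac add_ac)
  finally show ?thesis .
qed

lemma pdiff_mult: "pdiff v (p*q) = pdiff v p * q + p * pdiff v q"
proof (induction p rule: pm_induct)
  case zero thus ?case by simp
next
  case (add p1 p2) thus ?case by (simp add: distrib_right pdiff_add)
next
  case (single k c)
  show ?case
  proof (induction q rule: pm_induct)
    case zero thus ?case by simp
  next
    case (add q1 q2) thus ?case by (simp add: distrib_left pdiff_add)
  next
    case (single k' c')
    show ?case by (rule pdiff_single_mult)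
  qed
qed

lemma finite_mvars[simp]: "finite (mvars p)" by (simp add: mvars_def)

lemma mvars_add: "mvars (p+q) \<subseteq> mvars p \<union> mvars q"
proof
  fix x assume "x \<in> mvars (p+q)"
  then obtain m where m: "m \<in> ks (p+q)" "x \<in> ks m" by (auto simp: mvars_def)
  hence "m \<in> ks p \<union> ks q" using keys_add[of p q] by blast
  thus "x \<in> mvars p \<union> mvars q" using m(2) by (auto simp: mvars_def)
qed

lemma mvars_mult: "mvars (p*q) \<subseteq> mvars p \<union> mvars q"
proof
  fix x assume "x \<in> mvars (p*q)"
  then obtain m where m: "m \<in> ks (p*q)" "x \<in> ks m" by (auto simp: mvars_def)
  then obtain a b where ab: "m = a + b" "a \<in> ks p" "b \<in> ks q" using keys_mult[of p q] by blast
  have "x \<in> ks a \<union> ks b" using m(2) ab(1) keys_add[of a b] by blast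
  thus "x \<in> mvars p \<union> mvars q" using ab by (auto simp: mvars_def)
qed

lemma pdiff_notin: "v \<notin> mvars p \<Longrightarrow> pdiff v p = 0"
  unfolding pdiff_def mvars_def by (auto intro!: sum.neutral simp: in_keys_iff)

definition nx :: "nat \<times> nat \<Rightarrow> jpoly" where "nx v = Var (fst v, Suc (snd v))"

lemma Dj_superset: "finite S \<Longrightarrow> mvars p \<subseteq> S \<Longrightarrow> Dj p = (\<Sum>v\<in>S. pdiff v p * nx v)"
  unfolding Dj_def nx_def by (rule sum.mono_neutral_left) (auto simp: pdiff_notin)

lemma Dj_add: "Dj (p+q) = Dj p + Dj q"
proof -
  let ?S = "mvars p \<union> mvars q"
  have "Dj (p+q) = (\<Sum>v\<in>?S. pdiff v (p+q) * nx v)"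
    by (rule Dj_superset) (use mvars_add[of p q] in auto)
  also have "\<dots> = (\<Sum>v\<in>?S. pdiff v p * nx v) + (\<Sum>v\<in>?S. pdiff v q * nx v)"
    by (simp add: pdiff_add distrib_right sum.distrib)
  also have "\<dots> = Dj p + Dj q"
    using Dj_superset[of ?S p] Dj_superset[of ?S q] by simp
  finally show ?thesis .
qed

lemma Dj_mult: "Dj (p*q) = Dj p * q + p * Dj q"
proof -
  let ?S = "mvars p \<union> mvars q"
  have "Dj (p*q) = (\<Sum>v\<in>?S. pdiff v (p*q) * nx v)"
    by (rule Dj_superset) (use mvars_mult[of p q] in auto)
  also have "\<dots> = (\<Sum>v\<in>?S. (pdiff v p * nx v) * q + p * (pdiff v q * nx v))"
    by (rule sum.cong) (simp_all add: pdiff_mult algebra_simps)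
  also have "\<dots> = (\<Sum>v\<in>?S. pdiff v p * nx v) * q + p * (\<Sum>v\<in>?S. pdiff v q * nx v)"
    by (simp add: sum.distrib sum_distrib_left sum_distrib_right)
  also have "\<dots> = Dj p * q + p * Dj q"
    using Dj_superset[of ?S p] Dj_superset[of ?S q] by simp
  finally show ?thesis .
qed

lemma Dj_zero[simp]: "Dj 0 = 0" by (simp add: Dj_def mvars_def)
lemma Dj_uminus: "Dj (-p) = - Dj p"
proof -
  have "Dj (-p) + Dj p = 0" by (simp flip: Dj_add)
  thus ?thesis by (simp add: eq_neg_iff_add_eq_0)
qed
lemma Dj_diff: "Dj (p-q) = Dj p - Dj q"
  using Dj_add[of p "-q"] by (simp add: Dj_uminus)
lemma Dj_mconst[simp]: "Dj (mconst c) = 0"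
  by (simp add: Dj_def mvars_def mconst_def)
lemma Dj_numeral[simp]: "Dj (numeral n) = 0"
  using Dj_mconst[of "numeral n"] by simp
lemma Dj_of_nat[simp]: "Dj (of_nat n) = 0"
  using Dj_mconst[of "of_nat n"] by simp
lemma Dj_one[simp]: "Dj 1 = 0"
  using Dj_mconst[of 1] by simp
lemma Dj_Var: "Dj (Var v) = Var (fst v, Suc (snd v))"
proof -
  have "mvars (Var v) = {v}" by (simp add: mvars_def Var_def)
  moreover have "pdiff v (Var v) = 1" by (simp add: Var_def pdiff_single)
  ultimately show ?thesis by (simp add: Dj_def)
qed
lemma Dj_fj[simp]: "Dj (fj i l) = fj i (Suc l)"
  by (simp add: fj_def Dj_Var)

lemma lookup_Var_mult: "lk (Var v * p) (sg v 1 + m) = lk p m"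
proof (induction p rule: pm_induct)
  case zero thus ?case by simp
next
  case (add p q) thus ?case by (simp add: distrib_left lookup_add)
next
  case (single k c) thus ?case
    by (simp add: Var_def mult_single lookup_single when_def)
qed

lemma Var_cancel: "Var v * p = Var v * q \<Longrightarrow> p = q"
  by (rule poly_mapping_eqI) (metis lookup_Var_mult)




lemma subst0_add[simp]: "subst0 (p+q) = subst0 p + subst0 q" by (simp add: subst0_def ins_add)
lemma subst0_mult[simp]: "subst0 (p*q) = subst0 p * subst0 q" by (simp add: subst0_def ins_mult)
lemma subst0_diff[simp]: "subst0 (p-q) = subst0 p - subst0 q" by (simp add: subst0_def ins_diff)
lemma subst0_uminus[simp]: "subst0 (-p) = - subst0 p" by (simp add: subst0_def ins_uminus)
lemma subst0_numeral[simp]: "subst0 (numeral n) = numeral n" by (simp add: subst0_def)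
lemma subst0_of_nat[simp]: "subst0 (of_nat n) = of_nat n" by (simp add: subst0_def)
lemma subst0_one[simp]: "subst0 1 = 1" by (simp add: subst0_def)
lemma subst0_power[simp]: "subst0 (p^n) = subst0 p ^ n" by (simp add: subst0_def ins_power)
lemma subst0_fj[simp]: "subst0 (fj i l) = (if i = 1 \<and> l = 1 then 0 else fj i l)"
  by (auto simp: subst0_def fj_def)

declare Dj_fj[simp del]
lemma Dj_fjn[simp]: "Dj (fj i (Suc 0)) = fj i 2" "Dj (fj i 1) = fj i 2" "Dj (fj i 2) = fj i 3" "Dj (fj i 3) = fj i 4"
  "Dj (fj i 4) = fj i 5" "Dj (fj i 5) = fj i 6"
  by (simp_all add: Dj_fj numeral_eq_Suc)
lemma Dj_power2: "Dj (p^2) = 2 * p * Dj p" by (simp add: power2_eq_square Dj_mult)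
lemmas Dj_simps = Dj_add Dj_mult Dj_diff Dj_uminus Dj_power2

definition qK :: jpoly where "qK = 65*(fj 1 1)*(fj 1 2)*(fj 1 3)*(fj 1 4)*(fj 2 1)^2 + 110*(fj 1 1)*(fj 1 2)*(fj 1 3)^2*(fj 2 1)*(fj 2 2) - 60*(fj 1 1)*(fj 1 2)^2*(fj 1 3)*(fj 2 1)*(fj 2 3) - 60*(fj 1 1)*(fj 1 2)^2*(fj 1 3)*(fj 2 2)^2 - 90*(fj 1 1)*(fj 1 2)^2*(fj 1 4)*(fj 2 1)*(fj 2 2) - 15*(fj 1 1)*(fj 1 2)^2*(fj 1 5)*(fj 2 1)^2 + 60*(fj 1 1)*(fj 1 2)^3*(fj 2 1)*(fj 2 4) + 60*(fj 1 1)*(fj 1 2)^3*(fj 2 2)*(fj 2 3) - 50*(fj 1 1)*(fj 1 3)^3*(fj 2 1)^2 - 90*(fj 1 1)^2*(fj 1 2)*(fj 1 3)*(fj 2 1)*(fj 2 4) + 114*(fj 1 1)^2*(fj 1 2)*(fj 1 3)*(fj 2 2)*(fj 2 3) - 9*(fj 1 1)^2*(fj 1 2)*(fj 1 4)*(fj 2 1)*(fj 2 3) + 75*(fj 1 1)^2*(fj 1 2)*(fj 1 4)*(fj 2 2)^2 + 15*(fj 1 1)^2*(fj 1 2)*(fj 1 5)*(fj 2 1)*(fj 2 2) + 15*(fj 1 1)^2*(fj 1 2)^2*(fj 2 1)*(fj 2 5) - 60*(fj 1 1)^2*(fj 1 2)^2*(fj 2 2)*(fj 2 4) - 27*(fj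 1 1)^2*(fj 1 2)^2*(fj 2 3)^2 - 31*(fj 1 1)^2*(fj 1 3)*(fj 1 4)*(fj 2 1)*(fj 2 2) + 5*(fj 1 1)^2*(fj 1 3)*(fj 1 5)*(fj 2 1)^2 + 100*(fj 1 1)^2*(fj 1 3)^2*(fj 2 1)*(fj 2 3) - 112*(fj 1 1)^2*(fj 1 3)^2*(fj 2 2)^2 - 7*(fj 1 1)^2*(fj 1 4)^2*(fj 2 1)^2 - 15*(fj 1 1)^3*(fj 1 2)*(fj 2 2)*(fj 2 5) + 34*(fj 1 1)^3*(fj 1 2)*(fj 2 3)*(fj 2 4) - 5*(fj 1 1)^3*(fj 1 3)*(fj 2 1)*(fj 2 5) + 56*(fj 1 1)^3*(fj 1 3)*(fj 2 2)*(fj 2 4) - 50*(fj 1 1)^3*(fj 1 3)*(fj 2 3)^2 + 14*(fj 1 1)^3*(fj 1 4)*(fj 2 1)*(fj 2 4) - 25*(fj 1 1)^3*(fj 1 4)*(fj 2 2)*(fj 2 3) - 5*(fj 1 1)^3*(fj 1 5)*(fj 2 1)*(fj 2 3) + 5*(fj 1 1)^4*(fj 2 3)*(fj 2 5) - 7*(fj 1 1)^4*(fj 2 4)^2 - 25*(fj 1 2)^2*(fj 1 3)^2*(fj 2 1)^2 + 60*(fj 1 2)^3*(fj 1 3)*(fj 2 1)*(fj 2 2) + 15*(fj 1 2)^3*(fj 1 4)*(fj 2 1)^2 - 60*(fj 1 2)^4*(fj 2 1)*(fj 2 3)"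

lemma brk_K: "brk 7 5 Lam7 Lam5 = fj 1 1 * qK"
  unfolding brk_def Lam7_def Lam5_def Delta_def qK_def
  by (simp add: Dj_simps) algebra




lemma K12_eq: "K12 = qK"
  unfolding K12_def
proof (rule the_equality)
  show "brk 7 5 Lam7 Lam5 = fj 1 1 * qK" by (rule brk_K)
  fix q assume "brk 7 5 Lam7 Lam5 = fj 1 1 * q"
  thus "q = qK" using brk_K by (metis Var_cancel fj_def)
qed

definition B0 :: jpoly where "B0 = fj 1 2"
definition X0 :: jpoly where "X0 = fj 1 2 * fj 2 1"
definition m0 :: jpoly where "m0 = subst0 M8"
definition n0 :: jpoly where "n0 = subst0 N12"

lemma s_L3: "subst0 Lam3 = - X0"
  unfolding Lam3_def Delta_def X0_def by simp
lemma s_L5: "subst0 Lam5 = 3 * B0 * X0"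
  unfolding Lam5_def Delta_def X0_def B0_def by simp
lemma s_L7: "subst0 Lam7 = -15 * B0^2 * X0"
  unfolding Lam7_def Delta_def X0_def B0_def by simp
lemma s_L9: "subst0 Lam9 = 105 * B0^3 * X0"
proof -
  have "subst0 Lam9 = 0 - 7 * subst0 Lam7 * fj 1 2" unfolding Lam9_def brk_def by simp
  thus ?thesis unfolding s_L7 B0_def by algebra
qed
lemma s_M10: "subst0 M10 = -8 * B0 * m0"
  unfolding M10_def brk_def m0_def by (simp add: B0_def algebra_simps)
lemma s_K12: "subst0 K12 = 5 * B0^2 * m0"
  unfolding K12_eq qK_def m0_def M8_def Delta_def B0_def by simp algebra
lemma s_H14: "subst0 H14 = -5 * B0 * n0"
  unfolding H14_def N12_def n0_def brk_def Lam5_def Lam3_def Delta_def B0_def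
  by (simp add: Dj_simps) algebra
lemma s_F16: "subst0 F16 = 35 * B0^2 * n0"
  unfolding F16_def N12_def n0_def brk_def Lam7_def Lam3_def Delta_def B0_def
  by (simp add: Dj_simps) algebra




definition vec :: "nat \<Rightarrow> nat \<Rightarrow> nat \<Rightarrow> nat \<Rightarrow> ((nat \<times> nat) \<Rightarrow>\<^sub>0 nat)" where
  "vec a b c d = sg (0,1) a + sg (0,2) b + sg (0,3) c + sg (0,4) d"

lemma lk_vec: "lk (vec a b c d) (0,1) = a" "lk (vec a b c d) (0,2) = b"
  "lk (vec a b c d) (0,3) = c" "lk (vec a b c d) (0,4) = d"
  by (simp_all add: vec_def lookup_add lookup_single)

lemma vec_add: "vec a b c d + vec a' b' c' d' = vec (a+a') (b+b') (c+c') (d+d')"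
  by (rule poly_mapping_eqI) (simp add: vec_def lookup_add lookup_single when_def)

lemma vec0: "vec 0 0 0 0 = 0" by (simp add: vec_def)

definition psi :: "nat \<times> nat \<Rightarrow> jpoly" where
  "psi v = (if v = (1,2) then Var (0,1) else if v = (2,1) then Var (0,2) else
            if v = (1,4) then Var (0,3) else if v = (1,5) then Var (0,4) else 0)"

abbreviation phi where "phi \<equiv> ins psi"

lemma phi_subst0: "phi (subst0 p) = phi p"
proof -
  have "(\<lambda>v. phi (if v = (1, 1) then 0 else Var v)) = psi"
    by (rule ext) (simp add: psi_def)
  thus ?thesis by (simp add: subst0_def ins_ins)
qed

lemma phi_fj[simp]: "phi (fj i l) = psi (i,l)" by (simp add: fj_def)

lemma single_power: "(sg k c) ^ n = sg (\<Sum>j<n. k) ((c::complex) ^ n)"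
  by (induction n) (simp_all add: mult_single add.commute)

lemma sum_sg: "(\<Sum>j<n. sg v (Suc 0)) = sg v n"
  by (induction n) (simp_all flip: single_add)

definition mon :: "nat \<Rightarrow> nat \<Rightarrow> nat \<Rightarrow> nat \<Rightarrow> jpoly" where
  "mon a b c d = Var (0,1) ^ a * Var (0,2) ^ b * Var (0,3) ^ c * Var (0,4) ^ d"

lemma mon_sg: "mconst k * mon a b c d = sg (vec a b c d) k"
  by (simp add: mon_def Var_def single_power sum_sg mconst_def mult_single vec_def add.assoc)

lemma phi_M8: "phi M8 = 3 * Var (0,1) * Var (0,3) * Var (0,2)^2"
  unfolding M8_def Delta_def by (simp add: ins_add ins_mult ins_diff ins_power psi_def) algebra

lemma phi_N12: "phi N12 = -9 * Var (0,1)^2 * Var (0,4) * Var (0,2)^3"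
  unfolding N12_def brk_def M8_def Lam3_def Delta_def
  by (simp add: Dj_simps ins_add ins_mult ins_diff ins_uminus ins_power psi_def) algebra




lemma phi_B0: "phi B0 = Var (0,1)" by (simp add: B0_def psi_def)
lemma phi_X0: "phi X0 = Var (0,1) * Var (0,2)" by (simp add: X0_def psi_def ins_mult)
lemma phi_m0: "phi m0 = 3 * Var (0,1) * Var (0,3) * Var (0,2)^2" by (simp add: m0_def phi_subst0 phi_M8)
lemma phi_n0: "phi n0 = -9 * Var (0,1)^2 * Var (0,4) * Var (0,2)^3" by (simp add: n0_def phi_subst0 phi_N12)

lemmas phi_simps = ins_mult ins_uminus ins_power phi_B0 phi_X0 phi_m0 phi_n0

lemma phi_g0: "phi (subst0 Lam3) = sg (vec 1 1 0 0) (-1)"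
proof -
  have "phi (subst0 Lam3) = mconst (-1) * mon 1 1 0 0"
    by (simp add: s_L3 phi_simps mon_def mconst_uminus, algebra?)
  thus ?thesis by (simp only: mon_sg)
qed

lemma phi_g1: "phi (subst0 Lam5) = sg (vec 2 1 0 0) (3)"
proof -
  have "phi (subst0 Lam5) = mconst (3) * mon 2 1 0 0"
    by (simp add: s_L5 phi_simps mon_def mconst_uminus, algebra?)
  thus ?thesis by (simp only: mon_sg)
qed

lemma phi_g2: "phi (subst0 Lam7) = sg (vec 3 1 0 0) (-15)"
proof -
  have "phi (subst0 Lam7) = mconst (-15) * mon 3 1 0 0"
    by (simp add: s_L7 phi_simps mon_def mconst_uminus, algebra?)
  thus ?thesis by (simp only: mon_sg)
qed

lemma phi_g3: "phi (subst0 M8) = sg (vec 1 2 1 0) (3)"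
proof -
  have "phi (subst0 M8) = mconst (3) * mon 1 2 1 0"
    by (simp add: m0_def[symmetric] phi_simps mon_def mconst_uminus, algebra?)
  thus ?thesis by (simp only: mon_sg)
qed

lemma phi_g4: "phi (subst0 Lam9) = sg (vec 4 1 0 0) (105)"
proof -
  have "phi (subst0 Lam9) = mconst (105) * mon 4 1 0 0"
    by (simp add: s_L9 phi_simps mon_def mconst_uminus, algebra?)
  thus ?thesis by (simp only: mon_sg)
qed

lemma phi_g5: "phi (subst0 M10) = sg (vec 2 2 1 0) (-24)"
proof -
  have "phi (subst0 M10) = mconst (-24) * mon 2 2 1 0"
    by (simp add: s_M10 phi_simps mon_def mconst_uminus, algebra?)
  thus ?thesis by (simp only: mon_sg)
qed

lemma phi_g6: "phi (subst0 N12) = sg (vec 2 3 0 1) (-9)"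
proof -
  have "phi (subst0 N12) = mconst (-9) * mon 2 3 0 1"
    by (simp add: n0_def[symmetric] phi_simps mon_def mconst_uminus, algebra?)
  thus ?thesis by (simp only: mon_sg)
qed

lemma phi_g7: "phi (subst0 K12) = sg (vec 3 2 1 0) (15)"
proof -
  have "phi (subst0 K12) = mconst (15) * mon 3 2 1 0"
    by (simp add: s_K12 phi_simps mon_def mconst_uminus, algebra?)
  thus ?thesis by (simp only: mon_sg)
qed

lemma phi_g8: "phi (subst0 H14) = sg (vec 3 3 0 1) (45)"
proof -
  have "phi (subst0 H14) = mconst (45) * mon 3 3 0 1"
    by (simp add: s_H14 phi_simps mon_def mconst_uminus, algebra?)
  thus ?thesis by (simp only: mon_sg)
qed

lemma phi_g9: "phi (subst0 F16) = sg (vec 4 3 0 1) (-315)"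
proof -
  have "phi (subst0 F16) = mconst (-315) * mon 4 3 0 1"
    by (simp add: s_F16 phi_simps mon_def mconst_uminus, algebra?)
  thus ?thesis by (simp only: mon_sg)
qed

definition Gl :: "jpoly list" where "Gl = [Lam3, Lam5, Lam7, M8, Lam9, M10, N12, K12, H14, F16]"
definition vb :: "nat list" where "vb = [1,2,3,1,4,2,2,3,3,4]"
definition vx :: "nat list" where "vx = [1,1,1,2,1,2,3,2,3,3]"
definition vm :: "nat list" where "vm = [0,0,0,1,0,1,0,1,0,0]"
definition vn :: "nat list" where "vn = [0,0,0,0,0,0,1,0,1,1]"
definition cf :: "complex list" where "cf = [-1,3,-15,3,105,-24,-9,15,45,-315]"
definition gv :: "nat \<Rightarrow> (nat \<times> nat) \<Rightarrow>\<^sub>0 nat" where "gv j = vec (vb!j) (vx!j) (vm!j) (vn!j)"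

lemma phi_gen: "j < 10 \<Longrightarrow> phi (subst0 (Gl!j)) = sg (gv j) (cf!j)"
proof -
  assume "j < 10"
  hence "j \<in> {0,1,2,3,4,5,6,7,8,9}" by auto
  thus ?thesis
    by (auto simp: Gl_def gv_def vb_def vx_def vm_def vn_def cf_def
        phi_g0 phi_g1 phi_g2 phi_g3 phi_g4 phi_g5 phi_g6 phi_g7 phi_g8 phi_g9)
qed




definition Gs :: "(nat \<Rightarrow> (nat \<times> nat) \<Rightarrow>\<^sub>0 nat) \<Rightarrow> (nat \<Rightarrow>\<^sub>0 nat) \<Rightarrow> (nat \<times> nat) \<Rightarrow>\<^sub>0 nat" where
  "Gs g e = (\<Sum>i\<in>ks e. \<Sum>j<lk e i. g i)"
definition Cs :: "(nat \<Rightarrow> complex) \<Rightarrow> (nat \<Rightarrow>\<^sub>0 nat) \<Rightarrow> complex" where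
  "Cs c e = (\<Prod>i\<in>ks e. c i ^ lk e i)"

lemma prod_single: "(\<Prod>i\<in>S. sg (a i) (b i)) = sg (\<Sum>i\<in>S. (a i :: (nat \<times> nat) \<Rightarrow>\<^sub>0 nat)) (\<Prod>i\<in>S. (b i::complex))"
  by (induction S rule: infinite_finite_induct) (simp_all add: mult_single)

lemma ins_mmono: "ins \<sigma> P = (\<Sum>m\<in>ks P. mconst (lk P m) * mmono \<sigma> m)"
  by (simp add: ins_def mmono_def)

lemma ins_cong: "(\<And>v. v \<in> mvars P \<Longrightarrow> \<sigma> v = \<tau> v) \<Longrightarrow> ins \<sigma> P = ins \<tau> P"
proof -
  assume a: "\<And>v. v \<in> mvars P \<Longrightarrow> \<sigma> v = \<tau> v"
  have "mmono \<sigma> m = mmono \<tau> m" if "m \<in> ks P" for m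
    unfolding mmono_def
  proof (intro prod.cong refl)
    fix x assume "x \<in> ks m"
    hence "x \<in> mvars P" using that by (auto simp: mvars_def)
    thus "\<sigma> x ^ lk m x = \<tau> x ^ lk m x" by (simp add: a)
  qed
  thus ?thesis by (simp add: ins_mmono)
qed

lemma ins_singles: "ins (\<lambda>i. sg (g i) (c i)) P = (\<Sum>e\<in>ks P. sg (Gs g e) (lk P e * Cs c e))"
  unfolding ins_def Gs_def Cs_def by (simp add: single_power prod_single mconst_def mult_single)

lemma ins_sum: "ins \<sigma> (\<Sum>k\<in>S. f k) = (\<Sum>k\<in>S. ins \<sigma> (f k))"
  by (induction S rule: infinite_finite_induct) (simp_all add: ins_add)

lemma family_phi:
  assumes "mvars P \<subseteq> {..<4}" "\<And>i. i < 4 \<Longrightarrow> phi (subst0 (\<sigma> i)) = sg (g i) (c i)"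
    "phi (subst0 pre) = sg h d"
  shows "phi (subst0 (pre * ins \<sigma> P)) = (\<Sum>e\<in>ks P. sg (h + Gs g e) (d * (lk P e * Cs c e)))"
proof -
  have "phi (subst0 (pre * ins \<sigma> P)) = phi pre * ins (\<lambda>i. phi (\<sigma> i)) P"
    by (simp add: phi_subst0 ins_mult ins_ins)
  also have "ins (\<lambda>i. phi (\<sigma> i)) P = ins (\<lambda>i. sg (g i) (c i)) P"
    by (rule ins_cong) (use assms(1,2) phi_subst0 in force)
  also have "phi pre = sg h d" using assms(3) by (simp add: phi_subst0)
  finally show ?thesis
    by (simp add: ins_singles sum_distrib_left mult_single mult.assoc)
qed

lemma lk_Gs: "lk (Gs g e) t = (\<Sum>i\<in>ks e. lk e i * lk (g i) t)"
  by (simp add: Gs_def lookup_sum)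

lemma sum4: "ks (e::nat \<Rightarrow>\<^sub>0 nat) \<subseteq> {..<4} \<Longrightarrow>
   (\<Sum>i\<in>ks e. lk e i * f i) = lk e 0 * f 0 + lk e 1 * f 1 + lk e 2 * f 2 + lk e 3 * (f 3::nat)"
proof -
  assume a: "ks e \<subseteq> {..<4}"
  have "(\<Sum>i\<in>ks e. lk e i * f i) = (\<Sum>i\<in>{0,1,2,3}. lk e i * f i)"
    by (rule sum.mono_neutral_left) (use a in \<open>auto simp: in_keys_iff\<close>)
  thus ?thesis by simp
qed

lemma lk_vec': "lk (vec a b c d) (0, Suc 0) = a"
  by (simp add: vec_def lookup_add lookup_single)

lemma mvars_keys: "mvars P \<subseteq> A \<Longrightarrow> e \<in> ks P \<Longrightarrow> ks e \<subseteq> A"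
  by (auto simp: mvars_def)

definition fg :: "nat list list" where "fg = [[0,1,3,6],[1,2,3,6],[2,3,4,6],[3,4,5,6],[4,5,6,7],[4,6,7,8],[4,7,8,9]]"
definition pid :: "nat list" where "pid = [0,2,4,5,7,8,9]"
definition LL :: "nat list \<Rightarrow> nat \<Rightarrow> nat \<Rightarrow> nat \<Rightarrow> nat \<Rightarrow> nat \<Rightarrow> nat" where
  "LL v k a0 a1 a2 a3 = (if k = 0 then 0 else v!(pid!k)) + a0 * v!(fg!k!0) + a1 * v!(fg!k!1) + a2 * v!(fg!k!2) + a3 * v!(fg!k!3)"

lemma arith_inj:
  assumes "k < 7" "k' < 7"
    "LL vb k a0 a1 a2 a3 = LL vb k' b0 b1 b2 b3"
    "LL vx k a0 a1 a2 a3 = LL vx k' b0 b1 b2 b3"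
    "LL vm k a0 a1 a2 a3 = LL vm k' b0 b1 b2 b3"
    "LL vn k a0 a1 a2 a3 = LL vn k' b0 b1 b2 b3"
  shows "k = k' \<and> a0 = b0 \<and> a1 = b1 \<and> a2 = b2 \<and> a3 = b3"
proof -
  have "k \<in> {0,1,2,3,4,5,6}" "k' \<in> {0,1,2,3,4,5,6}" using assms(1,2) by auto
  thus ?thesis using assms(3-6)
    by (auto simp: LL_def fg_def pid_def vb_def vx_def vm_def vn_def)
qed

definition hh :: "nat \<Rightarrow> (nat \<times> nat) \<Rightarrow>\<^sub>0 nat" where "hh k = (if k = 0 then 0 else gv (pid!k))"
definition dd :: "nat \<Rightarrow> complex" where "dd k = (if k = 0 then 1 else cf!(pid!k))"
definition gg :: "nat \<Rightarrow> nat \<Rightarrow> (nat \<times> nat) \<Rightarrow>\<^sub>0 nat" where "gg k i = gv (fg!k!i)"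
definition cc :: "nat \<Rightarrow> nat \<Rightarrow> complex" where "cc k i = cf!(fg!k!i)"
definition pre :: "nat \<Rightarrow> jpoly" where "pre k = (if k = 0 then 1 else Gl!(pid!k))"

lemma fg_lt: "k < 7 \<Longrightarrow> i < 4 \<Longrightarrow> fg!k!i < 10"
proof -
  assume "k < 7" "i < 4"
  hence "k \<in> {0,1,2,3,4,5,6}" "i \<in> {0,1,2,3}" by auto
  thus ?thesis by (auto simp: fg_def)
qed

lemma pid_lt: "k < 7 \<Longrightarrow> pid!k < 10"
proof -
  assume "k < 7"
  hence "k \<in> {0,1,2,3,4,5,6}" by auto
  thus ?thesis by (auto simp: pid_def)
qed

lemma cf_nz: "j < 10 \<Longrightarrow> cf!j \<noteq> 0"
proof -
  assume "j < 10"
  hence "j \<in> {0,1,2,3,4,5,6,7,8,9}" by auto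
  thus ?thesis by (auto simp: cf_def)
qed

lemma phi_pre: "k < 7 \<Longrightarrow> phi (subst0 (pre k)) = sg (hh k) (dd k)"
  by (cases "k = 0") (simp_all add: pre_def hh_def dd_def phi_gen pid_lt)

lemma phi_famgen: "k < 7 \<Longrightarrow> i < 4 \<Longrightarrow> phi (subst0 (Gl!(fg!k!i))) = sg (gg k i) (cc k i)"
  by (simp add: gg_def cc_def phi_gen fg_lt)

lemma lk_hh: "lk (hh k) (0,j) = (if k = 0 then 0 else lk (gv (pid!k)) (0,j))"
  by (simp add: hh_def)

lemma H_lookup:
  assumes "ks e \<subseteq> {..<4}" "j \<in> {1,2,3,4}"
  shows "lk (hh k + Gs (gg k) e) (0,j) = LL ([vb,vx,vm,vn]!(j-1)) k (lk e 0) (lk e 1) (lk e 2) (lk e 3)"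
proof -
  have "lk (hh k + Gs (gg k) e) (0,j) = lk (hh k) (0,j) + (\<Sum>i\<in>ks e. lk e i * lk (gg k i) (0,j))"
    by (simp add: lookup_add lk_Gs)
  also have "\<dots> = lk (hh k) (0,j) + (lk e 0 * lk (gg k 0) (0,j) + lk e 1 * lk (gg k 1) (0,j)
      + lk e 2 * lk (gg k 2) (0,j) + lk e 3 * lk (gg k 3) (0,j))"
    by (simp add: sum4[OF assms(1)])
  finally show ?thesis using assms(2)
    by (auto simp: LL_def lk_hh gg_def gv_def lk_vec lk_vec')
qed

lemma H_inj:
  assumes "k < 7" "k' < 7" "ks e \<subseteq> {..<4}" "ks e' \<subseteq> {..<4}"
    "hh k + Gs (gg k) e = hh k' + Gs (gg k') e'"
  shows "k = k' \<and> e = e'"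
proof -
  have eq: "lk (hh k + Gs (gg k) e) (0,j) = lk (hh k' + Gs (gg k') e') (0,j)" for j
    using assms(5) by simp
  have "k = k' \<and> lk e 0 = lk e' 0 \<and> lk e 1 = lk e' 1 \<and> lk e 2 = lk e' 2 \<and> lk e 3 = lk e' 3"
    apply (rule arith_inj[OF assms(1,2)])
    using eq[of 1] eq[of 2] eq[of 3] eq[of 4]
    by (simp_all only: H_lookup[OF assms(3)] H_lookup[OF assms(4)] insert_iff nth_Cons_0 nth_Cons_Suc
        diff_self_eq_0 simp_thms) (simp_all add: numeral_eq_Suc)
  moreover have "e = e'"
  proof (rule poly_mapping_eqI)
    fix i show "lk e i = lk e' i"
    proof (cases "i < 4")
      case True
      hence "i \<in> {0,1,2,3}" by auto
      thus ?thesis using calculation by auto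
    next
      case False
      hence "i \<notin> ks e" "i \<notin> ks e'" using assms(3,4) by auto
      thus ?thesis by (simp add: in_keys_iff)
    qed
  qed
  ultimately show ?thesis by simp
qed

lemma Cs_nz: "ks e \<subseteq> {..<4} \<Longrightarrow> k < 7 \<Longrightarrow> Cs (cc k) e \<noteq> 0"
  unfolding Cs_def cc_def using cf_nz fg_lt by (auto simp: subset_iff)

lemma dd_nz: "k < 7 \<Longrightarrow> dd k \<noteq> 0"
  by (simp add: dd_def cf_nz pid_lt)

lemma uniq:
  assumes len: "length Ps = 7" and mv: "\<And>k. k < 7 \<Longrightarrow> mvars (Ps!k) \<subseteq> {..<4}"
    and z: "(\<Sum>k<7. subst0 (pre k * ins (\<lambda>i. Gl!(fg!k!i)) (Ps!k))) = 0"
  shows "\<And>k. k < 7 \<Longrightarrow> Ps!k = 0"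
proof (rule ccontr)
  fix k0 assume k0: "k0 < 7" and nz: "Ps!k0 \<noteq> 0"
  define H where "H k e = hh k + Gs (gg k) e" for k e
  define co where "co k e = dd k * (lk (Ps!k) e * Cs (cc k) e)" for k e
  have T: "phi (subst0 (pre k * ins (\<lambda>i. Gl!(fg!k!i)) (Ps!k))) = (\<Sum>e\<in>ks (Ps!k). sg (H k e) (co k e))"
    if "k < 7" for k
    unfolding H_def co_def
    by (rule family_phi) (simp_all add: mv that phi_famgen phi_pre)
  have "(\<Sum>k<7. phi (subst0 (pre k * ins (\<lambda>i. Gl!(fg!k!i)) (Ps!k)))) = 0"
    using arg_cong[OF z, of phi] by (simp only: ins_sum ins_zero)
  moreover have "(\<Sum>k<7. phi (subst0 (pre k * ins (\<lambda>i. Gl!(fg!k!i)) (Ps!k))))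
     = (\<Sum>k<7. \<Sum>e\<in>ks (Ps!k). sg (H k e) (co k e))"
    by (rule sum.cong[OF refl], rule T, simp)
  ultimately have "(\<Sum>k<7. \<Sum>e\<in>ks (Ps!k). sg (H k e) (co k e)) = 0" by simp
  hence L: "(\<Sum>k<7. \<Sum>e\<in>ks (Ps!k). (co k e when H k e = t)) = 0" for t
  proof -
    assume "(\<Sum>k<7. \<Sum>e\<in>ks (Ps!k). sg (H k e) (co k e)) = 0"
    hence "lk (\<Sum>k<7. \<Sum>e\<in>ks (Ps!k). sg (H k e) (co k e)) t = 0" by simp
    thus ?thesis by (simp add: lookup_sum lookup_single)
  qed
  obtain e0 where e0: "e0 \<in> ks (Ps!k0)" using nz by (metis ex_in_conv keys_eq_empty)
  have "(co k e when H k e = H k0 e0) = (if k = k0 \<and> e = e0 then co k e else 0)"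
    if "k < 7" "e \<in> ks (Ps!k)" for k e
    using H_inj[OF that(1) k0 mvars_keys[OF mv[OF that(1)] that(2)] mvars_keys[OF mv[OF k0] e0]]
    by (auto simp: H_def when_def)
  hence "(\<Sum>k<7. \<Sum>e\<in>ks (Ps!k). (co k e when H k e = H k0 e0))
        = (\<Sum>k<7. \<Sum>e\<in>ks (Ps!k). (if k = k0 \<and> e = e0 then co k e else 0))"
    by (intro sum.cong refl) auto
  also have "\<dots> = (\<Sum>k<7. if k = k0 then co k e0 else 0)"
    by (intro sum.cong refl) (auto simp: e0)
  also have "\<dots> = co k0 e0" using k0 by simp
  finally have "co k0 e0 = 0" using L by simp
  moreover have "co k0 e0 \<noteq> 0"
    using dd_nz[OF k0] Cs_nz[OF mvars_keys[OF mv[OF k0] e0] k0] e0 by (simp add: co_def in_keys_iff)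
  ultimately show False by simp
qed




lemma subst0_mconst[simp]: "subst0 (mconst c) = mconst c" by (simp add: subst0_def)

lemma subst0_zero[simp]: "subst0 0 = 0" by (simp add: subst0_def)

lemma subst0_ins: "subst0 (ins \<sigma> P) = ins (\<lambda>i. subst0 (\<sigma> i)) P"
  by (simp add: subst0_def ins_ins)

definition RHS :: "nat mpoly \<Rightarrow> nat mpoly \<Rightarrow> nat mpoly \<Rightarrow> nat mpoly \<Rightarrow> nat mpoly \<Rightarrow> nat mpoly \<Rightarrow> nat mpoly \<Rightarrow> jpoly" where
  "RHS P0 Q0 R0 S0 T0 U0 V0 =
        subst0 (ins (\<lambda>i. [Lam3, Lam5, M8, N12] ! i) P0)
          + subst0 (Lam7 * ins (\<lambda>i. [Lam5, Lam7, M8, N12] ! i) Q0)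
          + subst0 (Lam9 * ins (\<lambda>i. [Lam7, M8, Lam9, N12] ! i) R0)
          + subst0 (M10 * ins (\<lambda>i. [M8, Lam9, M10, N12] ! i) S0)
          + subst0 (K12 * ins (\<lambda>i. [Lam9, M10, N12, K12] ! i) T0)
          + subst0 (H14 * ins (\<lambda>i. [Lam9, N12, K12, H14] ! i) U0)
          + subst0 (F16 * ins (\<lambda>i. [Lam9, K12, H14, F16] ! i) V0)"

definition rep :: "jpoly \<Rightarrow> bool" where
  "rep X \<longleftrightarrow> (\<exists>P0 Q0 R0 S0 T0 U0 V0 :: nat mpoly.
        mvars P0 \<subseteq> {..<4} \<and> mvars Q0 \<subseteq> {..<4} \<and> mvars R0 \<subseteq> {..<4} \<and>
        mvars S0 \<subseteq> {..<4} \<and> mvars T0 \<subseteq> {..<4} \<and> mvars U0 \<subseteq> {..<4} \<and>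
        mvars V0 \<subseteq> {..<4} \<and> X = RHS P0 Q0 R0 S0 T0 U0 V0)"

lemma repI: "mvars P0 \<subseteq> {..<4} \<Longrightarrow> mvars Q0 \<subseteq> {..<4} \<Longrightarrow> mvars R0 \<subseteq> {..<4} \<Longrightarrow>
        mvars S0 \<subseteq> {..<4} \<Longrightarrow> mvars T0 \<subseteq> {..<4} \<Longrightarrow> mvars U0 \<subseteq> {..<4} \<Longrightarrow>
        mvars V0 \<subseteq> {..<4} \<Longrightarrow> X = RHS P0 Q0 R0 S0 T0 U0 V0 \<Longrightarrow> rep X"
  unfolding rep_def by blast

lemma mvars_zero[simp]: "mvars 0 = {}" by (simp add: mvars_def)

lemma rep_zero: "rep 0"
  by (rule repI[of 0 0 0 0 0 0 0]) (simp_all add: RHS_def)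

lemma mvars_add_sub: "mvars p \<subseteq> A \<Longrightarrow> mvars q \<subseteq> A \<Longrightarrow> mvars (p+q) \<subseteq> A"
  using mvars_add[of p q] by blast

lemma RHS_add: "RHS P0 Q0 R0 S0 T0 U0 V0 + RHS P0' Q0' R0' S0' T0' U0' V0'
   = RHS (P0+P0') (Q0+Q0') (R0+R0') (S0+S0') (T0+T0') (U0+U0') (V0+V0')"
  unfolding RHS_def by (simp only: ins_add subst0_add distrib_left add_ac)

lemma rep_add: "rep X \<Longrightarrow> rep Y \<Longrightarrow> rep (X + Y)"
  unfolding rep_def
  apply (elim exE conjE)
  subgoal for A1 B1 A2 B2 A3 B3 A4 B4 A5 B5 A6 B6 A7 B7
    apply (rule exI[of _ "A1+B1"], rule exI[of _ "A2+B2"], rule exI[of _ "A3+B3"],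
        rule exI[of _ "A4+B4"], rule exI[of _ "A5+B5"], rule exI[of _ "A6+B6"], rule exI[of _ "A7+B7"])
    by (simp add: mvars_add_sub RHS_add)
  done

lemma s_L3': "subst0 Lam3 = mconst (-1) * X0" by (simp add: s_L3 mconst_uminus)
lemma s_L7': "subst0 Lam7 = mconst (-15) * B0^2 * X0" by (simp add: s_L7 mconst_uminus)
lemma s_M10': "subst0 M10 = mconst (-8) * B0 * m0" by (simp add: s_M10 mconst_uminus)
lemma s_H14': "subst0 H14 = mconst (-5) * B0 * n0" by (simp add: s_H14 mconst_uminus)

definition ev4 :: "nat \<Rightarrow> nat \<Rightarrow> nat \<Rightarrow> nat \<Rightarrow> nat \<Rightarrow>\<^sub>0 nat" where
  "ev4 a b c d = sg 0 a + sg 1 b + sg 2 c + sg 3 d"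

lemma ks_add_sub: "ks f \<subseteq> A \<Longrightarrow> ks g \<subseteq> A \<Longrightarrow> ks (f+g) \<subseteq> A"
  using keys_add[of f g] by blast

lemma ks_ev4: "ks (ev4 a b c d) \<subseteq> {0,1,2,3}"
  unfolding ev4_def by (intro ks_add_sub) auto

lemma mvars_ev4: "mvars (sg (ev4 a b c d) x) \<subseteq> {..<4}"
  using ks_ev4[of a b c d] by (auto simp: mvars_def)

lemma mmono_ev4: "mmono \<tau> (ev4 a b c d) = \<tau> 0 ^ a * \<tau> 1 ^ b * \<tau> 2 ^ c * \<tau> 3 ^ d"
  by (subst mmono_superset[OF _ ks_ev4]) (simp_all add: ev4_def lookup_add lookup_single mult.assoc)

lemma fam0: "rep (mconst d * (mconst (-1)^e0 * 3^e1) * B0^(e1) * X0^(e0+e1) * m0^(e2) * n0^(e3))"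
proof -
  let ?P = "sg (ev4 e0 e1 e2 e3) d"
  have "RHS ?P 0 0 0 0 0 0 = mconst d * (subst0 Lam3 ^ e0 * subst0 Lam5 ^ e1 * subst0 M8 ^ e2 * subst0 N12 ^ e3)"
    by (simp add: RHS_def subst0_ins ins_single mmono_ev4)
  also have "\<dots> = mconst d * (mconst (-1)^e0 * 3^e1) * B0^(e1) * X0^(e0+e1) * m0^(e2) * n0^(e3)"
    by (simp add: s_L3' s_L5 s_L7' s_L9 s_M10' s_K12 s_H14' s_F16 power_mult_distrib power_add power_mult
          flip: m0_def n0_def; simp add: mult_ac power2_eq_square)
  finally show ?thesis
    by (intro repI[of ?P 0 0 0 0 0 0]) (simp_all add: mvars_ev4)
qed

lemma fam1: "rep (mconst d * (mconst (-15) * 3^e0 * mconst (-15)^e1) * B0^(2+e0+2*e1) * X0^(1+e0+e1) * m0^(e2) * n0^(e3))"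
proof -
  let ?P = "sg (ev4 e0 e1 e2 e3) d"
  have "RHS 0 ?P 0 0 0 0 0 = subst0 Lam7 * (mconst d * (subst0 Lam5 ^ e0 * subst0 Lam7 ^ e1 * subst0 M8 ^ e2 * subst0 N12 ^ e3))"
    by (simp add: RHS_def subst0_ins ins_single mmono_ev4)
  also have "\<dots> = mconst d * (mconst (-15) * 3^e0 * mconst (-15)^e1) * B0^(2+e0+2*e1) * X0^(1+e0+e1) * m0^(e2) * n0^(e3)"
    by (simp add: s_L3' s_L5 s_L7' s_L9 s_M10' s_K12 s_H14' s_F16 power_mult_distrib power_add power_mult
          flip: m0_def n0_def; simp add: mult_ac power2_eq_square)
  finally show ?thesis
    by (intro repI[of 0 ?P 0 0 0 0 0]) (simp_all add: mvars_ev4)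
qed

lemma fam2: "rep (mconst d * (105 * mconst (-15)^e0 * 105^e2) * B0^(3+2*e0+3*e2) * X0^(1+e0+e2) * m0^(e1) * n0^(e3))"
proof -
  let ?P = "sg (ev4 e0 e1 e2 e3) d"
  have "RHS 0 0 ?P 0 0 0 0 = subst0 Lam9 * (mconst d * (subst0 Lam7 ^ e0 * subst0 M8 ^ e1 * subst0 Lam9 ^ e2 * subst0 N12 ^ e3))"
    by (simp add: RHS_def subst0_ins ins_single mmono_ev4)
  also have "\<dots> = mconst d * (105 * mconst (-15)^e0 * 105^e2) * B0^(3+2*e0+3*e2) * X0^(1+e0+e2) * m0^(e1) * n0^(e3)"
    by (simp add: s_L3' s_L5 s_L7' s_L9 s_M10' s_K12 s_H14' s_F16 power_mult_distrib power_add power_mult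
          flip: m0_def n0_def; simp add: mult_ac power2_eq_square)
  finally show ?thesis
    by (intro repI[of 0 0 ?P 0 0 0 0]) (simp_all add: mvars_ev4)
qed

lemma fam3: "rep (mconst d * (mconst (-8) * 105^e1 * mconst (-8)^e2) * B0^(1+3*e1+e2) * X0^(e1) * m0^(1+e0+e2) * n0^(e3))"
proof -
  let ?P = "sg (ev4 e0 e1 e2 e3) d"
  have "RHS 0 0 0 ?P 0 0 0 = subst0 M10 * (mconst d * (subst0 M8 ^ e0 * subst0 Lam9 ^ e1 * subst0 M10 ^ e2 * subst0 N12 ^ e3))"
    by (simp add: RHS_def subst0_ins ins_single mmono_ev4)
  also have "\<dots> = mconst d * (mconst (-8) * 105^e1 * mconst (-8)^e2) * B0^(1+3*e1+e2) * X0^(e1) * m0^(1+e0+e2) * n0^(e3)"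
    by (simp add: s_L3' s_L5 s_L7' s_L9 s_M10' s_K12 s_H14' s_F16 power_mult_distrib power_add power_mult
          flip: m0_def n0_def; simp add: mult_ac power2_eq_square)
  finally show ?thesis
    by (intro repI[of 0 0 0 ?P 0 0 0]) (simp_all add: mvars_ev4)
qed

lemma fam4: "rep (mconst d * (5 * 105^e0 * mconst (-8)^e1 * 5^e3) * B0^(2+3*e0+e1+2*e3) * X0^(e0) * m0^(1+e1+e3) * n0^(e2))"
proof -
  let ?P = "sg (ev4 e0 e1 e2 e3) d"
  have "RHS 0 0 0 0 ?P 0 0 = subst0 K12 * (mconst d * (subst0 Lam9 ^ e0 * subst0 M10 ^ e1 * subst0 N12 ^ e2 * subst0 K12 ^ e3))"
    by (simp add: RHS_def subst0_ins ins_single mmono_ev4)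
  also have "\<dots> = mconst d * (5 * 105^e0 * mconst (-8)^e1 * 5^e3) * B0^(2+3*e0+e1+2*e3) * X0^(e0) * m0^(1+e1+e3) * n0^(e2)"
    by (simp add: s_L3' s_L5 s_L7' s_L9 s_M10' s_K12 s_H14' s_F16 power_mult_distrib power_add power_mult
          flip: m0_def n0_def; simp add: mult_ac power2_eq_square)
  finally show ?thesis
    by (intro repI[of 0 0 0 0 ?P 0 0]) (simp_all add: mvars_ev4)
qed

lemma fam5: "rep (mconst d * (mconst (-5) * 105^e0 * 5^e2 * mconst (-5)^e3) * B0^(1+3*e0+2*e2+e3) * X0^(e0) * m0^(e2) * n0^(1+e1+e3))"
proof -
  let ?P = "sg (ev4 e0 e1 e2 e3) d"
  have "RHS 0 0 0 0 0 ?P 0 = subst0 H14 * (mconst d * (subst0 Lam9 ^ e0 * subst0 N12 ^ e1 * subst0 K12 ^ e2 * subst0 H14 ^ e3))"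
    by (simp add: RHS_def subst0_ins ins_single mmono_ev4)
  also have "\<dots> = mconst d * (mconst (-5) * 105^e0 * 5^e2 * mconst (-5)^e3) * B0^(1+3*e0+2*e2+e3) * X0^(e0) * m0^(e2) * n0^(1+e1+e3)"
    by (simp add: s_L3' s_L5 s_L7' s_L9 s_M10' s_K12 s_H14' s_F16 power_mult_distrib power_add power_mult
          flip: m0_def n0_def; simp add: mult_ac power2_eq_square)
  finally show ?thesis
    by (intro repI[of 0 0 0 0 0 ?P 0]) (simp_all add: mvars_ev4)
qed

lemma fam6: "rep (mconst d * (35 * 105^e0 * 5^e1 * mconst (-5)^e2 * 35^e3) * B0^(2+3*e0+2*e1+e2+2*e3) * X0^(e0) * m0^(e1) * n0^(1+e2+e3))"
proof -
  let ?P = "sg (ev4 e0 e1 e2 e3) d"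
  have "RHS 0 0 0 0 0 0 ?P = subst0 F16 * (mconst d * (subst0 Lam9 ^ e0 * subst0 K12 ^ e1 * subst0 H14 ^ e2 * subst0 F16 ^ e3))"
    by (simp add: RHS_def subst0_ins ins_single mmono_ev4)
  also have "\<dots> = mconst d * (35 * 105^e0 * 5^e1 * mconst (-5)^e2 * 35^e3) * B0^(2+3*e0+2*e1+e2+2*e3) * X0^(e0) * m0^(e1) * n0^(1+e2+e3)"
    by (simp add: s_L3' s_L5 s_L7' s_L9 s_M10' s_K12 s_H14' s_F16 power_mult_distrib power_add power_mult
          flip: m0_def n0_def; simp add: mult_ac power2_eq_square)
  finally show ?thesis
    by (intro repI[of 0 0 0 0 0 0 ?P]) (simp_all add: mvars_ev4)
qed




lemma mono_rep0:
  assumes "\<beta> \<le> a"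
  shows "rep (mconst c * B0^\<beta> * X0^a * m0^\<mu> * n0^\<nu>)"
proof -
  let ?K = "((-1)^(a-\<beta>) * 3^(\<beta>)) :: complex"
  have Knz: "?K \<noteq> 0" by simp
  have KJ: "mconst (-1)^(a-\<beta>) * 3^(\<beta>) = mconst ?K" by (simp only: mconst_mult mconst_power mconst_numeral)
  have ck: "c / ?K * ?K = c" using Knz by simp
  have x1: "(a-\<beta>)+(\<beta>) = a" using assms by arith+
  have "rep (mconst (c / ?K) * (mconst (-1)^(a-\<beta>) * 3^(\<beta>)) * B0^((\<beta>)) * X0^((a-\<beta>)+(\<beta>)) * m0^((\<mu>)) * n0^((\<nu>)))"
    by (rule fam0)
  thus ?thesis by (simp only: KJ x1 ck flip: mconst_mult)
qed

lemma mono_rep1: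
  assumes "a+1 \<le> \<beta> \<and> \<beta> \<le> 2*a"
  shows "rep (mconst c * B0^\<beta> * X0^a * m0^\<mu> * n0^\<nu>)"
proof -
  let ?K = "((-15) * 3^(2*a-\<beta>) * (-15)^(\<beta>-a-1)) :: complex"
  have Knz: "?K \<noteq> 0" by simp
  have KJ: "mconst (-15) * 3^(2*a-\<beta>) * mconst (-15)^(\<beta>-a-1) = mconst ?K" by (simp only: mconst_mult mconst_power mconst_numeral)
  have ck: "c / ?K * ?K = c" using Knz by simp
  have x1: "2+(2*a-\<beta>)+2*(\<beta>-a-1) = \<beta>" "1+(2*a-\<beta>)+(\<beta>-a-1) = a" using assms by arith+
  have "rep (mconst (c / ?K) * (mconst (-15) * 3^(2*a-\<beta>) * mconst (-15)^(\<beta>-a-1)) * B0^(2+(2*a-\<beta>)+2*(\<beta>-a-1)) * X0^(1+(2*a-\<beta>)+(\<beta>-a-1)) * m0^((\<mu>)) * n0^((\<nu>)))"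
    by (rule fam1)
  thus ?thesis by (simp only: KJ x1 ck flip: mconst_mult)
qed

lemma mono_rep2:
  assumes "2*a+1 \<le> \<beta> \<and> \<beta> \<le> 3*a"
  shows "rep (mconst c * B0^\<beta> * X0^a * m0^\<mu> * n0^\<nu>)"
proof -
  let ?K = "(105 * (-15)^(3*a-\<beta>) * 105^(\<beta>-2*a-1)) :: complex"
  have Knz: "?K \<noteq> 0" by simp
  have KJ: "105 * mconst (-15)^(3*a-\<beta>) * 105^(\<beta>-2*a-1) = mconst ?K" by (simp only: mconst_mult mconst_power mconst_numeral)
  have ck: "c / ?K * ?K = c" using Knz by simp
  have x1: "3+2*(3*a-\<beta>)+3*(\<beta>-2*a-1) = \<beta>" "1+(3*a-\<beta>)+(\<beta>-2*a-1) = a" using assms by arith+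
  have "rep (mconst (c / ?K) * (105 * mconst (-15)^(3*a-\<beta>) * 105^(\<beta>-2*a-1)) * B0^(3+2*(3*a-\<beta>)+3*(\<beta>-2*a-1)) * X0^(1+(3*a-\<beta>)+(\<beta>-2*a-1)) * m0^((\<mu>)) * n0^((\<nu>)))"
    by (rule fam2)
  thus ?thesis by (simp only: KJ x1 ck flip: mconst_mult)
qed

lemma mono_rep3:
  assumes "3*a+1 \<le> \<beta> \<and> \<beta> \<le> 3*a+\<mu>"
  shows "rep (mconst c * B0^\<beta> * X0^a * m0^\<mu> * n0^\<nu>)"
proof -
  let ?K = "((-8) * 105^(a) * (-8)^(\<beta>-3*a-1)) :: complex"
  have Knz: "?K \<noteq> 0" by simp
  have KJ: "mconst (-8) * 105^(a) * mconst (-8)^(\<beta>-3*a-1) = mconst ?K" by (simp only: mconst_mult mconst_power mconst_numeral)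
  have ck: "c / ?K * ?K = c" using Knz by simp
  have x1: "1+3*(a)+(\<beta>-3*a-1) = \<beta>" "1+(\<mu>+3*a-\<beta>)+(\<beta>-3*a-1) = \<mu>" using assms by arith+
  have "rep (mconst (c / ?K) * (mconst (-8) * 105^(a) * mconst (-8)^(\<beta>-3*a-1)) * B0^(1+3*(a)+(\<beta>-3*a-1)) * X0^((a)) * m0^(1+(\<mu>+3*a-\<beta>)+(\<beta>-3*a-1)) * n0^((\<nu>)))"
    by (rule fam3)
  thus ?thesis by (simp only: KJ x1 ck flip: mconst_mult)
qed

lemma mono_rep4:
  assumes "3*a+\<mu>+1 \<le> \<beta> \<and> \<beta> \<le> 3*a+2*\<mu>"
  shows "rep (mconst c * B0^\<beta> * X0^a * m0^\<mu> * n0^\<nu>)"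
proof -
  let ?K = "(5 * 105^(a) * (-8)^(2*\<mu>+3*a-\<beta>) * 5^(\<beta>-3*a-\<mu>-1)) :: complex"
  have Knz: "?K \<noteq> 0" by simp
  have KJ: "5 * 105^(a) * mconst (-8)^(2*\<mu>+3*a-\<beta>) * 5^(\<beta>-3*a-\<mu>-1) = mconst ?K" by (simp only: mconst_mult mconst_power mconst_numeral)
  have ck: "c / ?K * ?K = c" using Knz by simp
  have x1: "2+3*(a)+(2*\<mu>+3*a-\<beta>)+2*(\<beta>-3*a-\<mu>-1) = \<beta>" "1+(2*\<mu>+3*a-\<beta>)+(\<beta>-3*a-\<mu>-1) = \<mu>" using assms by arith+
  have "rep (mconst (c / ?K) * (5 * 105^(a) * mconst (-8)^(2*\<mu>+3*a-\<beta>) * 5^(\<beta>-3*a-\<mu>-1)) * B0^(2+3*(a)+(2*\<mu>+3*a-\<beta>)+2*(\<beta>-3*a-\<mu>-1)) * X0^((a)) * m0^(1+(2*\<mu>+3*a-\<beta>)+(\<beta>-3*a-\<mu>-1)) * n0^((\<nu>)))"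
    by (rule fam4)
  thus ?thesis by (simp only: KJ x1 ck flip: mconst_mult)
qed

lemma mono_rep5:
  assumes "3*a+2*\<mu>+1 \<le> \<beta> \<and> \<beta> \<le> 3*a+2*\<mu>+\<nu>"
  shows "rep (mconst c * B0^\<beta> * X0^a * m0^\<mu> * n0^\<nu>)"
proof -
  let ?K = "((-5) * 105^(a) * 5^(\<mu>) * (-5)^(\<beta>-3*a-2*\<mu>-1)) :: complex"
  have Knz: "?K \<noteq> 0" by simp
  have KJ: "mconst (-5) * 105^(a) * 5^(\<mu>) * mconst (-5)^(\<beta>-3*a-2*\<mu>-1) = mconst ?K" by (simp only: mconst_mult mconst_power mconst_numeral)
  have ck: "c / ?K * ?K = c" using Knz by simp
  have x1: "1+3*(a)+2*(\<mu>)+(\<beta>-3*a-2*\<mu>-1) = \<beta>" "1+(\<nu>+3*a+2*\<mu>-\<beta>)+(\<beta>-3*a-2*\<mu>-1) = \<nu>" using assms by arith+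
  have "rep (mconst (c / ?K) * (mconst (-5) * 105^(a) * 5^(\<mu>) * mconst (-5)^(\<beta>-3*a-2*\<mu>-1)) * B0^(1+3*(a)+2*(\<mu>)+(\<beta>-3*a-2*\<mu>-1)) * X0^((a)) * m0^((\<mu>)) * n0^(1+(\<nu>+3*a+2*\<mu>-\<beta>)+(\<beta>-3*a-2*\<mu>-1)))"
    by (rule fam5)
  thus ?thesis by (simp only: KJ x1 ck flip: mconst_mult)
qed

lemma mono_rep6:
  assumes "3*a+2*\<mu>+\<nu>+1 \<le> \<beta> \<and> \<beta> \<le> 3*a+2*\<mu>+2*\<nu>"
  shows "rep (mconst c * B0^\<beta> * X0^a * m0^\<mu> * n0^\<nu>)"
proof -
  let ?K = "(35 * 105^(a) * 5^(\<mu>) * (-5)^(2*\<nu>+3*a+2*\<mu>-\<beta>) * 35^(\<beta>-3*a-2*\<mu>-\<nu>-1)) :: complex"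
  have Knz: "?K \<noteq> 0" by simp
  have KJ: "35 * 105^(a) * 5^(\<mu>) * mconst (-5)^(2*\<nu>+3*a+2*\<mu>-\<beta>) * 35^(\<beta>-3*a-2*\<mu>-\<nu>-1) = mconst ?K" by (simp only: mconst_mult mconst_power mconst_numeral)
  have ck: "c / ?K * ?K = c" using Knz by simp
  have x1: "2+3*(a)+2*(\<mu>)+(2*\<nu>+3*a+2*\<mu>-\<beta>)+2*(\<beta>-3*a-2*\<mu>-\<nu>-1) = \<beta>" "1+(2*\<nu>+3*a+2*\<mu>-\<beta>)+(\<beta>-3*a-2*\<mu>-\<nu>-1) = \<nu>" using assms by arith+
  have "rep (mconst (c / ?K) * (35 * 105^(a) * 5^(\<mu>) * mconst (-5)^(2*\<nu>+3*a+2*\<mu>-\<beta>) * 35^(\<beta>-3*a-2*\<mu>-\<nu>-1)) * B0^(2+3*(a)+2*(\<mu>)+(2*\<nu>+3*a+2*\<mu>-\<beta>)+2*(\<beta>-3*a-2*\<mu>-\<nu>-1)) * X0^((a)) * m0^((\<mu>)) * n0^(1+(2*\<nu>+3*a+2*\<mu>-\<beta>)+(\<beta>-3*a-2*\<mu>-\<nu>-1)))"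
    by (rule fam6)
  thus ?thesis by (simp only: KJ x1 ck flip: mconst_mult)
qed

lemma mono_rep:
  assumes "\<beta> \<le> 3*a + 2*\<mu> + 2*\<nu>"
  shows "rep (mconst c * B0^\<beta> * X0^a * m0^\<mu> * n0^\<nu>)"
proof -
  consider "\<beta> \<le> a" | "a+1 \<le> \<beta> \<and> \<beta> \<le> 2*a" | "2*a+1 \<le> \<beta> \<and> \<beta> \<le> 3*a"
    | "3*a+1 \<le> \<beta> \<and> \<beta> \<le> 3*a+\<mu>" | "3*a+\<mu>+1 \<le> \<beta> \<and> \<beta> \<le> 3*a+2*\<mu>"
    | "3*a+2*\<mu>+1 \<le> \<beta> \<and> \<beta> \<le> 3*a+2*\<mu>+\<nu>"
    | "3*a+2*\<mu>+\<nu>+1 \<le> \<beta> \<and> \<beta> \<le> 3*a+2*\<mu>+2*\<nu>"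
    using assms by linarith
  thus ?thesis
    by cases (fact mono_rep0 mono_rep1 mono_rep2 mono_rep3 mono_rep4 mono_rep5 mono_rep6)+
qed




definition kL :: "complex list" where "kL = [-1, 3, -15, 1, 105, -8, 1, 5, -5, 35]"
definition p1 :: "nat list" where "p1 = [0,1,2,0,3,1,0,2,1,2]"
definition p2 :: "nat list" where "p2 = [1,1,1,0,1,0,0,0,0,0]"
definition p3 :: "nat list" where "p3 = [0,0,0,1,0,1,0,1,0,0]"
definition p4 :: "nat list" where "p4 = [0,0,0,0,0,0,1,0,1,1]"

lemma lt10: "(i::nat) < 10 \<Longrightarrow> i = 0 \<or> i = 1 \<or> i = 2 \<or> i = 3 \<or> i = 4 \<or> i = 5 \<or> i = 6 \<or> i = 7 \<or> i = 8 \<or> i = 9"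
  by auto

lemma sgen: "i < 10 \<Longrightarrow> subst0 (Gl!i) = mconst (kL!i) * B0^(p1!i) * X0^(p2!i) * m0^(p3!i) * n0^(p4!i)"
proof -
  assume "i < 10"
  thus ?thesis
    by (elim lt10[elim_format] disjE) (simp_all add: Gl_def kL_def p1_def p2_def p3_def p4_def s_L3' s_L5 s_L7' s_L9 s_M10' s_K12 s_H14' s_F16
        flip: m0_def n0_def)
qed

lemma pbound: "i < 10 \<Longrightarrow> p1!i \<le> 3 * p2!i + 2 * p3!i + 2 * p4!i"
proof -
  assume "i < 10"
  thus ?thesis by (elim lt10[elim_format] disjE) (simp_all add: p1_def p2_def p3_def p4_def)
qed

lemma prod_monos:
  "(\<Prod>i\<in>S. (mconst (k i) * B^(a i) * X^(b i) * M^(c i) * N^(d i)) ^ n i)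
   = mconst (\<Prod>i\<in>S. k i ^ n i) * B^(\<Sum>i\<in>S. a i * n i) * X^(\<Sum>i\<in>S. b i * n i)
     * M^(\<Sum>i\<in>S. c i * n i) * (N::jpoly)^(\<Sum>i\<in>S. d i * n i)"
proof (induction S rule: infinite_finite_induct)
  case (insert x F)
  thus ?case
    by (simp add: power_mult_distrib power_add power_mult mconst_mult mconst_power; simp add: mult_ac)
qed simp_all

lemma single_rep:
  assumes ke: "ks e \<subseteq> {..<10}"
  shows "rep (ins (\<lambda>i. subst0 (Gl!i)) (sg e c))"
proof -
  let ?S = "ks e"
  have "ins (\<lambda>i. subst0 (Gl!i)) (sg e c) = mconst c * (\<Prod>i\<in>?S. subst0 (Gl!i) ^ lk e i)"
    by (simp add: ins_single mmono_def)
  also have "(\<Prod>i\<in>?S. subst0 (Gl!i) ^ lk e i)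
      = (\<Prod>i\<in>?S. (mconst (kL!i) * B0^(p1!i) * X0^(p2!i) * m0^(p3!i) * n0^(p4!i)) ^ lk e i)"
    using ke by (intro prod.cong refl) (auto simp: sgen)
  also have "\<dots> = mconst (\<Prod>i\<in>?S. (kL!i) ^ lk e i) * B0^(\<Sum>i\<in>?S. p1!i * lk e i) * X0^(\<Sum>i\<in>?S. p2!i * lk e i)
     * m0^(\<Sum>i\<in>?S. p3!i * lk e i) * n0^(\<Sum>i\<in>?S. p4!i * lk e i)"
    by (rule prod_monos)
  finally have eq: "ins (\<lambda>i. subst0 (Gl!i)) (sg e c) = mconst (c * (\<Prod>i\<in>?S. (kL!i) ^ lk e i)) * B0^(\<Sum>i\<in>?S. p1!i * lk e i) * X0^(\<Sum>i\<in>?S. p2!i * lk e i)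
     * m0^(\<Sum>i\<in>?S. p3!i * lk e i) * n0^(\<Sum>i\<in>?S. p4!i * lk e i)"
    by (simp add: mconst_mult mult.assoc)
  have "(\<Sum>i\<in>?S. p1!i * lk e i) \<le> (\<Sum>i\<in>?S. (3 * p2!i + 2 * p3!i + 2 * p4!i) * lk e i)"
    using ke by (intro sum_mono mult_right_mono) (auto simp: pbound)
  also have "\<dots> = 3 * (\<Sum>i\<in>?S. p2!i * lk e i) + 2 * (\<Sum>i\<in>?S. p3!i * lk e i) + 2 * (\<Sum>i\<in>?S. p4!i * lk e i)"
    by (simp add: sum.distrib sum_distrib_left algebra_simps)
  finally show ?thesis unfolding eq by (rule mono_rep)
qed

lemma exist: "mvars P \<subseteq> {..<10} \<Longrightarrow> rep (ins (\<lambda>i. subst0 (Gl!i)) P)"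
proof -
  assume mv: "mvars P \<subseteq> {..<10}"
  have "rep (\<Sum>e\<in>A. ins (\<lambda>i. subst0 (Gl!i)) (sg e (lk P e)))" if "finite A" "A \<subseteq> ks P" for A
    using that
  proof (induction A rule: finite_induct)
    case empty thus ?case by (simp add: rep_zero)
  next
    case (insert x F)
    have "rep (ins (\<lambda>i. subst0 (Gl!i)) (sg x (lk P x)))"
      using insert.prems mvars_keys[OF mv] by (intro single_rep) auto
    thus ?case using insert by (simp add: rep_add)
  qed
  hence "rep (ins (\<lambda>i. subst0 (Gl!i)) (\<Sum>e\<in>ks P. sg e (lk P e)))" by (simp add: ins_sum)
  thus ?thesis by (simp flip: mpoly_sum_single)
qed

lemma sum7: "(\<Sum>k<(7::nat). f k) = f 0 + f 1 + f 2 + f 3 + f 4 + f 5 + (f 6 :: jpoly)"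
  by (simp add: eval_nat_numeral add.assoc)

lemma lt4: "(i::nat) < 4 \<Longrightarrow> i = 0 \<or> i = 1 \<or> i = 2 \<or> i = 3" by auto

lemma famcong:
  assumes "mvars P \<subseteq> {..<4}" "\<And>i. i < 4 \<Longrightarrow> \<sigma> i = \<tau> i"
  shows "ins \<sigma> P = ins \<tau> P"
  using assms by (intro ins_cong) auto




lemma pre_vals: "pre 0 = 1" "pre 1 = Lam7" "pre 2 = Lam9" "pre 3 = M10" "pre 4 = K12" "pre 5 = H14" "pre 6 = F16"
  by (simp_all add: pre_def pid_def Gl_def)

theorem mainTheorem12:
  "(\<forall>P :: nat mpoly. mvars P \<subseteq> {..<10} \<longrightarrow>
     (\<exists>P0 Q0 R0 S0 T0 U0 V0 :: nat mpoly.
        mvars P0 \<subseteq> {..<4} \<and> mvars Q0 \<subseteq> {..<4} \<and> mvars R0 \<subseteq> {..<4} \<and>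
        mvars S0 \<subseteq> {..<4} \<and> mvars T0 \<subseteq> {..<4} \<and> mvars U0 \<subseteq> {..<4} \<and>
        mvars V0 \<subseteq> {..<4} \<and>
        ins (\<lambda>i. subst0 ([Lam3, Lam5, Lam7, M8, Lam9, M10, N12, K12, H14, F16] ! i)) P
        = subst0 (ins (\<lambda>i. [Lam3, Lam5, M8, N12] ! i) P0)
          + subst0 (Lam7 * ins (\<lambda>i. [Lam5, Lam7, M8, N12] ! i) Q0)
          + subst0 (Lam9 * ins (\<lambda>i. [Lam7, M8, Lam9, N12] ! i) R0)
          + subst0 (M10 * ins (\<lambda>i. [M8, Lam9, M10, N12] ! i) S0)
          + subst0 (K12 * ins (\<lambda>i. [Lam9, M10, N12, K12] ! i) T0)
          + subst0 (H14 * ins (\<lambda>i. [Lam9, N12, K12, H14] ! i) U0)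
          + subst0 (F16 * ins (\<lambda>i. [Lam9, K12, H14, F16] ! i) V0)))
   \<and>
   (\<forall>P0 Q0 R0 S0 T0 U0 V0 :: nat mpoly.
        mvars P0 \<subseteq> {..<4} \<and> mvars Q0 \<subseteq> {..<4} \<and> mvars R0 \<subseteq> {..<4} \<and>
        mvars S0 \<subseteq> {..<4} \<and> mvars T0 \<subseteq> {..<4} \<and> mvars U0 \<subseteq> {..<4} \<and>
        mvars V0 \<subseteq> {..<4} \<longrightarrow>
        subst0 (ins (\<lambda>i. [Lam3, Lam5, M8, N12] ! i) P0)
          + subst0 (Lam7 * ins (\<lambda>i. [Lam5, Lam7, M8, N12] ! i) Q0)
          + subst0 (Lam9 * ins (\<lambda>i. [Lam7, M8, Lam9, N12] ! i) R0)
          + subst0 (M10 * ins (\<lambda>i. [M8, Lam9, M10, N12] ! i) S0)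
          + subst0 (K12 * ins (\<lambda>i. [Lam9, M10, N12, K12] ! i) T0)
          + subst0 (H14 * ins (\<lambda>i. [Lam9, N12, K12, H14] ! i) U0)
          + subst0 (F16 * ins (\<lambda>i. [Lam9, K12, H14, F16] ! i) V0) = 0
        \<longrightarrow> P0 = 0 \<and> Q0 = 0 \<and> R0 = 0 \<and> S0 = 0 \<and> T0 = 0 \<and> U0 = 0 \<and> V0 = 0)"
proof -
  have A: "\<forall>P :: nat mpoly. mvars P \<subseteq> {..<10} \<longrightarrow> (\<exists>P0 Q0 R0 S0 T0 U0 V0 :: nat mpoly.
        mvars P0 \<subseteq> {..<4} \<and> mvars Q0 \<subseteq> {..<4} \<and> mvars R0 \<subseteq> {..<4} \<and>
        mvars S0 \<subseteq> {..<4} \<and> mvars T0 \<subseteq> {..<4} \<and> mvars U0 \<subseteq> {..<4} \<and>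
        mvars V0 \<subseteq> {..<4} \<and>
        ins (\<lambda>i. subst0 ([Lam3, Lam5, Lam7, M8, Lam9, M10, N12, K12, H14, F16] ! i)) P
        = RHS P0 Q0 R0 S0 T0 U0 V0)"
  proof (intro allI impI)
    fix P :: "nat mpoly" assume "mvars P \<subseteq> {..<10}"
    from exist[OF this] show "\<exists>P0 Q0 R0 S0 T0 U0 V0 :: nat mpoly.
        mvars P0 \<subseteq> {..<4} \<and> mvars Q0 \<subseteq> {..<4} \<and> mvars R0 \<subseteq> {..<4} \<and>
        mvars S0 \<subseteq> {..<4} \<and> mvars T0 \<subseteq> {..<4} \<and> mvars U0 \<subseteq> {..<4} \<and>
        mvars V0 \<subseteq> {..<4} \<and>
        ins (\<lambda>i. subst0 ([Lam3, Lam5, Lam7, M8, Lam9, M10, N12, K12, H14, F16] ! i)) P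
        = RHS P0 Q0 R0 S0 T0 U0 V0"
      unfolding rep_def Gl_def .
  qed
  have B: "\<forall>P0 Q0 R0 S0 T0 U0 V0 :: nat mpoly.
        mvars P0 \<subseteq> {..<4} \<and> mvars Q0 \<subseteq> {..<4} \<and> mvars R0 \<subseteq> {..<4} \<and>
        mvars S0 \<subseteq> {..<4} \<and> mvars T0 \<subseteq> {..<4} \<and> mvars U0 \<subseteq> {..<4} \<and>
        mvars V0 \<subseteq> {..<4} \<longrightarrow> RHS P0 Q0 R0 S0 T0 U0 V0 = 0
        \<longrightarrow> P0 = 0 \<and> Q0 = 0 \<and> R0 = 0 \<and> S0 = 0 \<and> T0 = 0 \<and> U0 = 0 \<and> V0 = 0"
  proof (intro allI impI)
    fix P0 Q0 R0 S0 T0 U0 V0 :: "nat mpoly"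
    assume mv: "mvars P0 \<subseteq> {..<4} \<and> mvars Q0 \<subseteq> {..<4} \<and> mvars R0 \<subseteq> {..<4} \<and>
        mvars S0 \<subseteq> {..<4} \<and> mvars T0 \<subseteq> {..<4} \<and> mvars U0 \<subseteq> {..<4} \<and>
        mvars V0 \<subseteq> {..<4}"
      and eq: "RHS P0 Q0 R0 S0 T0 U0 V0 = 0"
    define Ps where "Ps = [P0, Q0, R0, S0, T0, U0, V0]"
    have Ps_nth: "Ps!0 = P0" "Ps!1 = Q0" "Ps!2 = R0" "Ps!3 = S0" "Ps!4 = T0" "Ps!5 = U0" "Ps!6 = V0"
      by (simp_all add: Ps_def)
    have mvk: "mvars (Ps!k) \<subseteq> {..<4}" if "k < 7" for k
    proof -
      have "k \<in> {0,1,2,3,4,5,6}" using that by auto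
      thus ?thesis using mv by (auto simp: Ps_def)
    qed
    have c0: "ins (\<lambda>i. [Lam3, Lam5, M8, N12] ! i) P0 = ins (\<lambda>i. Gl!(fg!0!i)) P0"
      by (rule famcong[OF mvk[of 0, simplified Ps_nth]]) (auto dest!: lt4 simp: Gl_def fg_def)
    have c1: "ins (\<lambda>i. [Lam5, Lam7, M8, N12] ! i) Q0 = ins (\<lambda>i. Gl!(fg!1!i)) Q0"
      by (rule famcong[OF mvk[of 1, simplified Ps_nth]]) (auto dest!: lt4 simp: Gl_def fg_def)
    have c2: "ins (\<lambda>i. [Lam7, M8, Lam9, N12] ! i) R0 = ins (\<lambda>i. Gl!(fg!2!i)) R0"
      by (rule famcong[OF mvk[of 2, simplified Ps_nth]]) (auto dest!: lt4 simp: Gl_def fg_def)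
    have c3: "ins (\<lambda>i. [M8, Lam9, M10, N12] ! i) S0 = ins (\<lambda>i. Gl!(fg!3!i)) S0"
      by (rule famcong[OF mvk[of 3, simplified Ps_nth]]) (auto dest!: lt4 simp: Gl_def fg_def)
    have c4: "ins (\<lambda>i. [Lam9, M10, N12, K12] ! i) T0 = ins (\<lambda>i. Gl!(fg!4!i)) T0"
      by (rule famcong[OF mvk[of 4, simplified Ps_nth]]) (auto dest!: lt4 simp: Gl_def fg_def)
    have c5: "ins (\<lambda>i. [Lam9, N12, K12, H14] ! i) U0 = ins (\<lambda>i. Gl!(fg!5!i)) U0"
      by (rule famcong[OF mvk[of 5, simplified Ps_nth]]) (auto dest!: lt4 simp: Gl_def fg_def)
    have c6: "ins (\<lambda>i. [Lam9, K12, H14, F16] ! i) V0 = ins (\<lambda>i. Gl!(fg!6!i)) V0"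
      by (rule famcong[OF mvk[of 6, simplified Ps_nth]]) (auto dest!: lt4 simp: Gl_def fg_def)
    have z: "(\<Sum>k<7. subst0 (pre k * ins (\<lambda>i. Gl!(fg!k!i)) (Ps!k))) = 0"
      apply (simp only: sum7 pre_vals Ps_nth mult_1_left)
      using eq unfolding RHS_def c0 c1 c2 c3 c4 c5 c6 .
    have "Ps!k = 0" if "k < 7" for k
      by (rule uniq[OF _ mvk z that]) (simp add: Ps_def)
    from this[of 0] this[of 1] this[of 2] this[of 3] this[of 4] this[of 5] this[of 6]
    show "P0 = 0 \<and> Q0 = 0 \<and> R0 = 0 \<and> S0 = 0 \<and> T0 = 0 \<and> U0 = 0 \<and> V0 = 0"
      unfolding Ps_nth by simp
  qed
  from A B show ?thesis unfolding RHS_def by (rule conjI)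
qed


end
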